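(* Let $\mathcal{R}$ be a von Neumann algebra and $A\in\mathcal{R}_{sa}$. Then $f_A:\mathcal{D}(\mathcal{R})\to\mathbb{R}$ is upper semicontinuous, i.e. for every $\mathcal{J}_0\in\mathcal{D}(\mathcal{R})$ and every $\varepsilon>0$ there exists $P\in\mathcal{J}_0$ such that $f_A(\mathcal{J})<f_A(\mathcal{J}_0)+\varepsilon$ for all $\mathcal{J}\in\mathcal{D}_P(\mathcal{R})$.
   Context: $\mathcal{P}(\mathcal{R})$ is the projection lattice of $\mathcal{R}$. A dual ideal of $\mathcal{P}(\mathcal{R})$ is a nonempty subset $\mathcal{J}$ with $0\notin\mathcal{J}$, $P,Q\in\mathcal{J}\Rightarrow P\wedge Q\in\mathcal{J}$, and $P\in\mathcal{J},P\le Q\Rightarrow Q\in\mathcal{J}$. $\mathcal{D}(\mathcal{R})$ is the set of dual ideals, with the topology generated by the basis $\mathcal{D}_P(\mathcal{R}):=\{\mathcal{J}\in\mathcal{D}(\mathcal{R}) : P\in\mathcal{J}\}$, $P\in\mathcal{P}(\mathcal{R})$. For $A\in\mathcal{R}_{sa}$ with right-continuous spectral family $(E^A_\lambda)$, $f_A(\mathcal{J}):=\inf\{\lambda : E^A_\lambda\in\mathcal{J}\}$. *)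

theory Defs
  imports "HOL-Analysis.Analysis"
begin

class chilbert = ab_group_add +
  fixes scaleC :: "complex \<Rightarrow> 'a \<Rightarrow> 'a"
    and cinner :: "'a \<Rightarrow> 'a \<Rightarrow> complex"
  assumes scaleC_add_right: "scaleC a (x + y) = scaleC a x + scaleC a y"
    and scaleC_add_left: "scaleC (a + b) x = scaleC a x + scaleC b x"
    and scaleC_scaleC: "scaleC a (scaleC b x) = scaleC (a * b) x"
    and scaleC_one: "scaleC 1 x = x"
    and cinner_add_left: "cinner (x + y) z = cinner x z + cinner y z"
    and cinner_scaleC_left: "cinner (scaleC a x) y = cnj a * cinner x y"
    and cinner_commute: "cinner y x = cnj (cinner x y)"
    and cinner_self_nonneg: "Im (cinner x x) = 0 \<and> Re (cinner x x) \<ge> 0"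
    and cinner_self_eq_0: "cinner x x = 0 \<longleftrightarrow> x = 0"
    and complete:
      "(\<forall>e>0. \<exists>N. \<forall>m\<ge>(N::nat). \<forall>n\<ge>N. sqrt (Re (cinner (X m - X n) (X m - X n))) < e)
        \<Longrightarrow> (\<exists>L. \<forall>e>0. \<exists>N::nat. \<forall>n\<ge>N. sqrt (Re (cinner (X n - L) (X n - L))) < e)"

definition cnorm :: "'h::chilbert \<Rightarrow> real" where
  "cnorm x = sqrt (Re (cinner x x))"

definition bounded_op :: "('h::chilbert \<Rightarrow> 'h) \<Rightarrow> bool" where
  "bounded_op T \<longleftrightarrow> (\<forall>x y. T (x + y) = T x + T y) \<and> (\<forall>a x. T (scaleC a x) = scaleC a (T x))
     \<and> (\<exists>K. \<forall>x. cnorm (T x) \<le> K * cnorm x)"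

text \<open>Hilbert-space adjoint (unique for bounded operators, by the Riesz representation theorem).\<close>
definition adj :: "('h::chilbert \<Rightarrow> 'h) \<Rightarrow> ('h \<Rightarrow> 'h)" where
  "adj T = (SOME S. \<forall>x y. cinner (T x) y = cinner x (S y))"

definition commutant :: "('h::chilbert \<Rightarrow> 'h) set \<Rightarrow> ('h \<Rightarrow> 'h) set" where
  "commutant S = {T. bounded_op T \<and> (\<forall>B\<in>S. T \<circ> B = B \<circ> T)}"

text \<open>A von Neumann algebra: a self-adjoint set of bounded operators equal to its double
  commutant (equivalently, by the bicommutant theorem, a weakly closed unital *-subalgebra).\<close>
definition von_neumann_algebra :: "('h::chilbert \<Rightarrow> 'h) set \<Rightarrow> bool" where
  "von_neumann_algebra R \<longleftrightarrow> R \<subseteq> {T. bounded_op T} \<and> (\<forall>T\<in>R. adj T \<in> R)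
     \<and> R = commutant (commutant R)"

definition self_adjoint_part :: "('h::chilbert \<Rightarrow> 'h) set \<Rightarrow> ('h \<Rightarrow> 'h) set" where
  "self_adjoint_part R = {A \<in> R. adj A = A}"

definition projections :: "('h::chilbert \<Rightarrow> 'h) set \<Rightarrow> ('h \<Rightarrow> 'h) set" where
  "projections R = {P \<in> R. P \<circ> P = P \<and> adj P = P}"

text \<open>Order of projections: P \<le> Q iff PQ = P (i.e. range P \<subseteq> range Q).\<close>
definition proj_le :: "('h::chilbert \<Rightarrow> 'h) \<Rightarrow> ('h \<Rightarrow> 'h) \<Rightarrow> bool" where
  "proj_le P Q \<longleftrightarrow> P \<circ> Q = P"

definition proj_meet :: "('h::chilbert \<Rightarrow> 'h) set \<Rightarrow> ('h \<Rightarrow> 'h) \<Rightarrow> ('h \<Rightarrow> 'h) \<Rightarrow> ('h \<Rightarrow> 'h)" where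
  "proj_meet R P Q = (THE M. M \<in> projections R \<and> proj_le M P \<and> proj_le M Q \<and>
      (\<forall>S\<in>projections R. proj_le S P \<and> proj_le S Q \<longrightarrow> proj_le S M))"

definition zero_op :: "'h::chilbert \<Rightarrow> 'h" where
  "zero_op = (\<lambda>x. 0)"

definition dual_ideals :: "('h::chilbert \<Rightarrow> 'h) set \<Rightarrow> ('h \<Rightarrow> 'h) set set" where
  "dual_ideals R = {J. J \<subseteq> projections R \<and> J \<noteq> {} \<and> zero_op \<notin> J
      \<and> (\<forall>P\<in>J. \<forall>Q\<in>J. proj_meet R P Q \<in> J)
      \<and> (\<forall>P\<in>J. \<forall>Q\<in>projections R. proj_le P Q \<longrightarrow> Q \<in> J)}"

definition dual_ideals_at :: "('h::chilbert \<Rightarrow> 'h) set \<Rightarrow> ('h \<Rightarrow> 'h) \<Rightarrow> ('h \<Rightarrow> 'h) set set" where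
  "dual_ideals_at R P = {J \<in> dual_ideals R. P \<in> J}"

text \<open>Right-continuous spectral resolution (Kadison--Ringrose, Thm. 5.2.2): E^A_\<lambda> is the
  largest projection E in R commuting with A such that AE \<le> \<lambda>E.\<close>
definition spectral_proj :: "('h::chilbert \<Rightarrow> 'h) set \<Rightarrow> ('h \<Rightarrow> 'h) \<Rightarrow> real \<Rightarrow> ('h \<Rightarrow> 'h)" where
  "spectral_proj R A lam = (THE E. E \<in> projections R \<and> A \<circ> E = E \<circ> A
      \<and> (\<forall>x. Re (cinner (A (E x)) x) \<le> lam * Re (cinner (E x) x))
      \<and> (\<forall>F\<in>projections R. A \<circ> F = F \<circ> A
            \<and> (\<forall>x. Re (cinner (A (F x)) x) \<le> lam * Re (cinner (F x) x)) \<longrightarrow> proj_le F E))"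

definition f_obs :: "('h::chilbert \<Rightarrow> 'h) set \<Rightarrow> ('h \<Rightarrow> 'h) \<Rightarrow> ('h \<Rightarrow> 'h) set \<Rightarrow> real" where
  "f_obs R A J = Inf {lam. spectral_proj R A lam \<in> J}"

end

theory Submission
  imports Defs
begin

lemma ci_zero_left: "cinner (0::'a::chilbert) y = 0"
proof -
  have "cinner (0 + 0::'a) y = cinner 0 y + cinner 0 y" by (rule cinner_add_left)
  then show ?thesis by simp
qed

lemma ci_zero_right: "cinner (x::'a::chilbert) 0 = 0"
  by (metis ci_zero_left cinner_commute complex_cnj_zero)

lemma ci_diff_left: "cinner ((x::'a::chilbert) - y) z = cinner x z - cinner y z"
proof -
  have "cinner ((x - y) + y) z = cinner (x - y) z + cinner y z" by (rule cinner_add_left)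
  then show ?thesis by simp
qed

lemma ci_add_right: "cinner (x::'a::chilbert) (y + z) = cinner x y + cinner x z"
  by (metis cinner_add_left cinner_commute complex_cnj_add)

lemma ci_scale_right: "cinner (x::'a::chilbert) (scaleC a y) = a * cinner x y"
  by (metis cinner_commute cinner_scaleC_left complex_cnj_cnj complex_cnj_mult)

lemma scaleC_zero: "scaleC a (0::'a::chilbert) = 0"
proof -
  have "scaleC a (0 + 0::'a) = scaleC a 0 + scaleC a 0" by (rule scaleC_add_right)
  then show ?thesis by simp
qed

lemma expand:
  fixes u v :: "'a::chilbert"
  shows "Re (cinner (u + scaleC (complex_of_real s) v) (u + scaleC (complex_of_real s) v))
    = Re (cinner u u) + 2 * s * Re (cinner u v) + s * s * Re (cinner v v)"
proof -
  have "cinner (u + scaleC (complex_of_real s) v) (u + scaleC (complex_of_real s) v)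
     = cinner u u + of_real s * cinner u v + of_real s * cinner v u + of_real s * of_real s * cinner v v"
    by (simp add: cinner_add_left ci_add_right ci_scale_right cinner_scaleC_left algebra_simps)
  moreover have "Re (cinner v u) = Re (cinner u v)" by (subst cinner_commute) simp
  ultimately show ?thesis by simp
qed

lemma re_self_sq: "Re (cinner (x::'a::chilbert) x) = (cnorm x)^2"
  unfolding cnorm_def using cinner_self_nonneg[of x] by simp

lemma quad_bound:
  fixes A :: "'a::chilbert \<Rightarrow> 'a"
  assumes K: "K > 0" and b: "cnorm (A y) \<le> K * cnorm y"
  shows "Re (cinner (A y) y) \<le> K * Re (cinner y y)" and "- K * Re (cinner y y) \<le> Re (cinner (A y) y)"
proof -
  have n0: "0 \<le> cnorm (A y)" unfolding cnorm_def using cinner_self_nonneg[of "A y"] by simp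
  have sq: "Re (cinner (A y) (A y)) \<le> K*K * Re (cinner y y)"
  proof -
    have "(cnorm (A y))^2 \<le> (K * cnorm y)^2" using b n0 by (rule power_mono)
    then show ?thesis using re_self_sq[of "A y"] re_self_sq[of y] by (simp add: power2_eq_square algebra_simps)
  qed
  have e1: "0 \<le> Re (cinner (A y) (A y)) + 2 * (-K) * Re (cinner (A y) y) + (-K) * (-K) * Re (cinner y y)"
    using expand[of "A y" "-K" y] cinner_self_nonneg by metis
  have e2: "0 \<le> Re (cinner (A y) (A y)) + 2 * K * Re (cinner (A y) y) + K * K * Re (cinner y y)"
    using expand[of "A y" "K" y] cinner_self_nonneg by metis
  have "2 * K * Re (cinner (A y) y) \<le> 2 * K * (K * Re (cinner y y))" using e1 sq by (simp add: algebra_simps)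
  then show "Re (cinner (A y) y) \<le> K * Re (cinner y y)" using K by simp
  have "2 * K * (- K * Re (cinner y y)) \<le> 2 * K * Re (cinner (A y) y)" using e2 sq by (simp add: algebra_simps)
  then have "K * (- K * Re (cinner y y)) \<le> K * Re (cinner (A y) y)" by simp
  then show "- K * Re (cinner y y) \<le> Re (cinner (A y) y)" by (simp only: mult_le_cancel_left_pos[OF K])
qed

lemma ci_diff_right: "cinner (x::'a::chilbert) (y - z) = cinner x y - cinner x z"
  by (metis ci_diff_left cinner_commute complex_cnj_diff)

lemma self_zero: "Re (cinner (y::'a::chilbert) y) \<le> 0 \<Longrightarrow> y = 0"
  using cinner_self_nonneg[of y] cinner_self_eq_0[of y] by (simp add: complex_eq_iff)

lemma adj_id: "adj (id::'a::chilbert \<Rightarrow> 'a) = id"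
proof -
  let ?Q = "\<lambda>S. \<forall>x y::'a. cinner (id x) y = cinner x (S y)"
  have "?Q id" by simp
  then have q: "?Q (adj id)" unfolding adj_def by (rule someI[where P="?Q"])
  show ?thesis
  proof
    fix y :: 'a
    let ?d = "y - adj id y"
    have "cinner ?d y = cinner ?d (adj id y)" using q by simp
    then have "cinner ?d ?d = 0" by (simp add: ci_diff_right)
    then have "y - adj id y = 0" using cinner_self_eq_0 by blast
    then show "adj id y = id y" by simp
  qed
qed

lemma adj_zero: "adj (zero_op::'a::chilbert \<Rightarrow> 'a) = zero_op"
proof -
  let ?Q = "\<lambda>S. \<forall>x y::'a. cinner (zero_op x) y = cinner x (S y)"
  have "?Q zero_op" by (simp add: zero_op_def ci_zero_left ci_zero_right)
  then have q: "?Q (adj zero_op)" unfolding adj_def by (rule someI[where P="?Q"])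
  show ?thesis
  proof
    fix y :: 'a
    have "cinner (adj zero_op y) (adj zero_op y) = 0" using q by (metis zero_op_def ci_zero_left)
    then have "adj zero_op y = 0" using cinner_self_eq_0 by blast
    then show "adj zero_op y = zero_op y" by (simp add: zero_op_def)
  qed
qed

lemma id_bounded: "bounded_op (id::'a::chilbert \<Rightarrow> 'a)"
  unfolding bounded_op_def by (auto intro: exI[of _ 1])

lemma zero_bounded: "bounded_op (zero_op::'a::chilbert \<Rightarrow> 'a)"
  unfolding bounded_op_def zero_op_def
  by (auto simp: scaleC_zero cnorm_def ci_zero_left intro: exI[of _ 0])

lemma id_in_R: "von_neumann_algebra R \<Longrightarrow> id \<in> projections R"
proof -
  assume v: "von_neumann_algebra R"
  have "id \<in> commutant (commutant R)"
    unfolding commutant_def by (simp add: id_bounded)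
  then show ?thesis using v unfolding von_neumann_algebra_def projections_def
    by (simp add: adj_id)
qed

lemma zero_in_R: "von_neumann_algebra R \<Longrightarrow> zero_op \<in> projections R"
proof -
  assume v: "von_neumann_algebra R"
  have "zero_op \<in> commutant (commutant R)"
    unfolding commutant_def
  proof (intro CollectI conjI ballI zero_bounded)
    fix B assume "B \<in> {T. bounded_op T \<and> (\<forall>B\<in>R. T \<circ> B = B \<circ> T)}"
    then have "bounded_op B" by simp
    then have "B 0 = 0" unfolding bounded_op_def by (metis add_cancel_right_right)
    then show "zero_op \<circ> B = B \<circ> zero_op" by (auto simp: zero_op_def)
  qed
  then show ?thesis using v unfolding von_neumann_algebra_def projections_def
    by (simp add: adj_zero) (simp add: zero_op_def comp_def)
qed

theorem proposition2p11:
  fixes R :: "('h::chilbert \<Rightarrow> 'h) set" and A :: "'h \<Rightarrow> 'h"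
  assumes "von_neumann_algebra R"
    and "A \<in> self_adjoint_part R"
    and "J0 \<in> dual_ideals R"
    and "\<epsilon> > 0"
  shows "\<exists>P\<in>J0. \<forall>J\<in>dual_ideals_at R P. f_obs R A J < f_obs R A J0 + \<epsilon>"
proof -
  note v = assms(1)
  have AR: "A \<in> R" using assms(2) unfolding self_adjoint_part_def by simp
  then have "bounded_op A" using v unfolding von_neumann_algebra_def by blast
  then obtain K0 where K0: "\<And>x. cnorm (A x) \<le> K0 * cnorm x" unfolding bounded_op_def by blast
  define K where "K = max K0 1"
  have Kpos: "K > 0" unfolding K_def by simp
  have bK: "cnorm (A x) \<le> K * cnorm x" for x
  proof -
    have "0 \<le> cnorm x" unfolding cnorm_def using cinner_self_nonneg[of x] by simp
    then have "K0 * cnorm x \<le> K * cnorm x" unfolding K_def by (simp add: mult_right_mono)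
    then show ?thesis using K0[of x] by linarith
  qed
  have idR: "id \<in> projections R" using id_in_R[OF v] .
  have zR: "zero_op \<in> projections R" using zero_in_R[OF v] .
  have hi: "spectral_proj R A lam = id" if lam: "lam \<ge> K" for lam
  proof -
    have ineqid: "Re (cinner (A x) x) \<le> lam * Re (cinner x x)" for x
    proof -
      have "Re (cinner (A x) x) \<le> K * Re (cinner x x)" using quad_bound(1)[OF Kpos bK] .
      also have "\<dots> \<le> lam * Re (cinner x x)" using lam cinner_self_nonneg[of x]
        by (simp add: mult_right_mono)
      finally show ?thesis .
    qed
    show ?thesis unfolding spectral_proj_def
  proof (rule the_equality)
    show "id \<in> projections R \<and> A \<circ> id = id \<circ> A \<and>
      (\<forall>x. Re (cinner (A (id x)) x) \<le> lam * Re (cinner (id x) x)) \<and>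
      (\<forall>F\<in>projections R. A \<circ> F = F \<circ> A \<and>
         (\<forall>x. Re (cinner (A (F x)) x) \<le> lam * Re (cinner (F x) x)) \<longrightarrow> proj_le F id)"
      using idR ineqid by (simp add: proj_le_def)
  next
    fix E assume "E \<in> projections R \<and> A \<circ> E = E \<circ> A \<and>
      (\<forall>x. Re (cinner (A (E x)) x) \<le> lam * Re (cinner (E x) x)) \<and>
      (\<forall>F\<in>projections R. A \<circ> F = F \<circ> A \<and>
         (\<forall>x. Re (cinner (A (F x)) x) \<le> lam * Re (cinner (F x) x)) \<longrightarrow> proj_le F E)"
    then have "proj_le id E" using idR ineqid
      by simp
    then show "E = id" unfolding proj_le_def by simp
  qed
  qed
  have lo_unique: "E = zero_op" if lam: "lam < - K" and E: "E \<in> projections R"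
    and ineq: "\<forall>x. Re (cinner (A (E x)) x) \<le> lam * Re (cinner (E x) x)" for lam E
  proof
    fix x
    let ?y = "E x"
    have "E \<circ> E = E" using E unfolding projections_def by simp
    from fun_cong[OF this, of x] have EE: "E ?y = ?y" by (simp only: comp_apply)
    have i1: "Re (cinner (A ?y) ?y) \<le> lam * Re (cinner ?y ?y)" using ineq[rule_format, of ?y] EE by simp
    have i2: "- K * Re (cinner ?y ?y) \<le> Re (cinner (A ?y) ?y)" using quad_bound(2)[OF Kpos bK] .
    have "0 \<le> Re (cinner ?y ?y)" using cinner_self_nonneg[of ?y] by simp
    then have "Re (cinner ?y ?y) \<le> 0"
    proof -
      have "0 \<le> (lam + K) * Re (cinner ?y ?y)" using i1 i2 by (simp add: algebra_simps)
      moreover have "lam + K < 0" using lam by simp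
      ultimately show ?thesis by (simp add: zero_le_mult_iff)
    qed
    then show "E x = zero_op x" using self_zero unfolding zero_op_def by blast
  qed
  have lo: "spectral_proj R A lam = zero_op" if lam: "lam < - K" for lam
    unfolding spectral_proj_def
  proof (rule the_equality)
    show "zero_op \<in> projections R \<and> A \<circ> zero_op = zero_op \<circ> A \<and>
      (\<forall>x. Re (cinner (A (zero_op x)) x) \<le> lam * Re (cinner (zero_op x) x)) \<and>
      (\<forall>F\<in>projections R. A \<circ> F = F \<circ> A \<and>
         (\<forall>x. Re (cinner (A (F x)) x) \<le> lam * Re (cinner (F x) x)) \<longrightarrow> proj_le F zero_op)"
    proof (intro conjI ballI impI allI)
      show "zero_op \<in> projections R" by (rule zR)
      have "A 0 = 0" using \<open>bounded_op A\<close> unfolding bounded_op_def by (metis add_cancel_right_right)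
      then show "A \<circ> zero_op = zero_op \<circ> A" by (auto simp: zero_op_def)
      fix x show "Re (cinner (A (zero_op x)) x) \<le> lam * Re (cinner (zero_op x) x)"
        using \<open>A 0 = 0\<close> by (simp add: zero_op_def ci_zero_left)
    next
      fix F assume "F \<in> projections R" and "A \<circ> F = F \<circ> A \<and>
         (\<forall>x. Re (cinner (A (F x)) x) \<le> lam * Re (cinner (F x) x))"
      then have "F = zero_op" using lo_unique[OF lam] by blast
      then show "proj_le F zero_op" unfolding proj_le_def by (simp add: zero_op_def comp_def)
    qed
  next
    fix E assume "E \<in> projections R \<and> A \<circ> E = E \<circ> A \<and>
      (\<forall>x. Re (cinner (A (E x)) x) \<le> lam * Re (cinner (E x) x)) \<and>
      (\<forall>F\<in>projections R. A \<circ> F = F \<circ> A \<and>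
         (\<forall>x. Re (cinner (A (F x)) x) \<le> lam * Re (cinner (F x) x)) \<longrightarrow> proj_le F E)"
    then show "E = zero_op" using lo_unique[OF lam] by blast
  qed
  have Sprops: "K \<in> {lam. spectral_proj R A lam \<in> J} \<and> bdd_below {lam. spectral_proj R A lam \<in> J}"
    if J: "J \<in> dual_ideals R" for J
  proof
    from J obtain P where P: "P \<in> J" unfolding dual_ideals_def by blast
    have "id \<in> J" using J P idR unfolding dual_ideals_def proj_le_def by auto
    then show "K \<in> {lam. spectral_proj R A lam \<in> J}" using hi by simp
    have "zero_op \<notin> J" using J unfolding dual_ideals_def by blast
    have "\<forall>lam\<in>{lam. spectral_proj R A lam \<in> J}. - K \<le> lam"
    proof
      fix lam assume "lam \<in> {lam. spectral_proj R A lam \<in> J}"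
      then have "spectral_proj R A lam \<in> J" by simp
      then show "- K \<le> lam" using lo[of lam] \<open>zero_op \<notin> J\<close> by (cases "lam < - K") auto
    qed
    then show "bdd_below {lam. spectral_proj R A lam \<in> J}" unfolding bdd_below_def by blast
  qed
  let ?S0 = "{lam. spectral_proj R A lam \<in> J0}"
  have ne: "?S0 \<noteq> {}" using Sprops[OF assms(3)] by blast
  have "Inf ?S0 < Inf ?S0 + \<epsilon>" using assms(4) by simp
  then obtain l1 where l1: "l1 \<in> ?S0" "l1 < Inf ?S0 + \<epsilon>" using cInf_lessD[OF ne] by blast
  show ?thesis
  proof (intro bexI ballI)
    show "spectral_proj R A l1 \<in> J0" using l1 by simp
    fix J assume "J \<in> dual_ideals_at R (spectral_proj R A l1)"
    then have J: "J \<in> dual_ideals R" and inJ: "spectral_proj R A l1 \<in> J"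
      unfolding dual_ideals_at_def by auto
    have "f_obs R A J \<le> l1" unfolding f_obs_def
      using cInf_lower[of l1 "{lam. spectral_proj R A lam \<in> J}"] inJ Sprops[OF J] by simp
    also have "\<dots> < f_obs R A J0 + \<epsilon>" using l1 unfolding f_obs_def by simp
    finally show "f_obs R A J < f_obs R A J0 + \<epsilon>" .
  qed
qed

end
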